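(* A pro-$p$ group $G$ is Frattini-resistant if and only if for all finitely generated subgroups $H$ and $K$ of $G$, $\Phi(H)\le\Phi(K)$ implies $H\le K$.
   Context: $p$ is a prime; subgroups are closed; $\Phi(H)$ is the Frattini subgroup. A triple $(G,K,H)$ of pro-$p$ groups with $H\le K\le G$ is hierarchical if $x\in G$, $x^p\in H$ imply $x\in K$. $G$ is Frattini-resistant if $(G,H,\Phi(H))$ is hierarchical for every finitely generated subgroup $H$ of $G$. *)

theory Defs
  imports "HOL-Algebra.Coset" "HOL-Algebra.Generated_Groups"
          "HOL-Analysis.Abstract_Topology_2" "HOL-Analysis.Product_Topology"
          "HOL-Analysis.T1_Spaces" "HOL-Computational_Algebra.Primes"
begin

definition topgroup :: "('a, 'b) monoid_scheme \<Rightarrow> 'a topology \<Rightarrow> bool" where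
  "topgroup G T \<longleftrightarrow> group G \<and> topspace T = carrier G \<and>
     continuous_map (prod_topology T T) T (\<lambda>(x, y). x \<otimes>\<^bsub>G\<^esub> y) \<and>
     continuous_map T T (\<lambda>x. inv\<^bsub>G\<^esub> x)"

text \<open>A pro-p group: a compact, Hausdorff, totally disconnected topological group
  (i.e. a profinite group) in which every open normal subgroup has p-power index.\<close>
definition pro_p_group :: "nat \<Rightarrow> ('a, 'b) monoid_scheme \<Rightarrow> 'a topology \<Rightarrow> bool" where
  "pro_p_group p G T \<longleftrightarrow> prime p \<and> topgroup G T \<and> compact_space T \<and> Hausdorff_space T \<and>
     (\<forall>x \<in> topspace T. connected_component_of_set T x = {x}) \<and>
     (\<forall>N. N \<lhd> G \<and> openin T N \<longrightarrow> (\<exists>k::nat. card (rcosets\<^bsub>G\<^esub> N) = p ^ k))"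

definition closed_subgroup :: "('a, 'b) monoid_scheme \<Rightarrow> 'a topology \<Rightarrow> 'a set \<Rightarrow> bool" where
  "closed_subgroup G T H \<longleftrightarrow> subgroup H G \<and> closedin T H"

definition fg_subgroup :: "('a, 'b) monoid_scheme \<Rightarrow> 'a topology \<Rightarrow> 'a set \<Rightarrow> bool" where
  "fg_subgroup G T H \<longleftrightarrow> closed_subgroup G T H \<and>
     (\<exists>S. finite S \<and> S \<subseteq> H \<and> T closure_of (generate G S) = H)"

definition maximal_open_subgroup ::
  "('a, 'b) monoid_scheme \<Rightarrow> 'a topology \<Rightarrow> 'a set \<Rightarrow> 'a set \<Rightarrow> bool" where
  "maximal_open_subgroup G T H M \<longleftrightarrow>
     subgroup M G \<and> M \<subset> H \<and> openin (subtopology T H) M \<and>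
     (\<forall>L. subgroup L G \<and> M \<subseteq> L \<and> L \<subset> H \<and> openin (subtopology T H) L \<longrightarrow> L = M)"

text \<open>Frattini subgroup: intersection of all maximal open subgroups of H
  (equal to H if there are none).\<close>
definition frattini :: "('a, 'b) monoid_scheme \<Rightarrow> 'a topology \<Rightarrow> 'a set \<Rightarrow> 'a set" where
  "frattini G T H = H \<inter> \<Inter> {M. maximal_open_subgroup G T H M}"

definition hierarchical :: "nat \<Rightarrow> ('a, 'b) monoid_scheme \<Rightarrow> 'a set \<Rightarrow> 'a set \<Rightarrow> bool" where
  "hierarchical p G K H \<longleftrightarrow> (\<forall>x \<in> carrier G. x [^]\<^bsub>G\<^esub> p \<in> H \<longrightarrow> x \<in> K)"

definition frattini_resistant :: "nat \<Rightarrow> ('a, 'b) monoid_scheme \<Rightarrow> 'a topology \<Rightarrow> bool" where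
  "frattini_resistant p G T \<longleftrightarrow>
     (\<forall>H. fg_subgroup G T H \<longrightarrow> hierarchical p G H (frattini G T H))"

end

theory Submission
  imports Defs "HOL-Algebra.Group_Action" "HOL-Algebra.Multiplicative_Group" "HOL-Analysis.Abstract_Topological_Spaces"
begin

lemma pgroup_fix_mod:
  assumes act: "group_action P X \<phi>" and fin: "finite (carrier P)" and ord: "order P = p ^ m"
    and pr: "prime p" and finX: "finite X"
  shows "card X mod p = card {x\<in>X. \<forall>g\<in>carrier P. \<phi> g x = x} mod p"
proof -
  interpret group_action P X \<phi> by (rule act)
  interpret P: group P using group_hom group_hom.axioms(1) by blast
  define F where "F = {x\<in>X. \<forall>g\<in>carrier P. \<phi> g x = x}"
  have orbsub: "orbit P \<phi> x \<subseteq> X" if "x \<in> X" for x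
    using that element_image unfolding orbit_def by blast
  have Forb: "orbit P \<phi> x = {x}" if "x \<in> F" for x
    using that orbit_refl[of x] unfolding F_def orbit_def by auto
  have nF: "p dvd card (orbit P \<phi> x)" if "x \<in> X" "x \<notin> F" for x
  proof -
    have "card (orbit P \<phi> x) dvd p ^ m"
      using orbit_stabilizer_theorem[OF that(1)] ord by (metis dvd_triv_left)
    then obtain i where i: "card (orbit P \<phi> x) = p ^ i"
      using divides_primepow_nat[OF pr] by blast
    have "\<not> (\<forall>g\<in>carrier P. \<phi> g x = x)" using that F_def by blast
    then obtain g where g: "g \<in> carrier P" "\<phi> g x \<noteq> x" by blast
    have "\<phi> g x \<in> orbit P \<phi> x" using g unfolding orbit_def by blast
    hence "{x, \<phi> g x} \<subseteq> orbit P \<phi> x" using orbit_refl[OF that(1)] by blast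
    moreover have "finite (orbit P \<phi> x)" using orbsub[OF that(1)] finX finite_subset by blast
    ultimately have "card {x, \<phi> g x} \<le> card (orbit P \<phi> x)" by (rule card_mono[rotated])
    hence "card (orbit P \<phi> x) \<ge> 2" using g by simp
    hence "i \<noteq> 0" using i by (metis power_0 numeral_le_one_iff semiring_norm(69))
    thus ?thesis using i by (cases i) auto
  qed
  have inner: "p dvd (\<Sum>y\<in>orb. (if y \<in> F then 0 else 1::nat))" if orbm: "orb \<in> orbits P X \<phi>" for orb
  proof -
    obtain x where x: "x \<in> X" "orb = orbit P \<phi> x" using orbm by (auto simp: orbits_def)
    show ?thesis
    proof (cases "x \<in> F")
      case True
      then show ?thesis using Forb x by simp
    next
      case False
      have "\<forall>y\<in>orb. y \<notin> F"
      proof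
        fix y assume y: "y \<in> orb"
        show "y \<notin> F"
        proof
          assume yF: "y \<in> F"
          have "y \<in> X" using y x orbsub by blast
          hence "x \<in> orbit P \<phi> y" using orbit_sym[OF x(1)] y x by blast
          thus False using Forb[OF yF] False yF by auto
        qed
      qed
      hence "(\<Sum>y\<in>orb. (if y \<in> F then 0 else 1::nat)) = card orb" by simp
      thus ?thesis using nF[OF x(1) False] x by simp
    qed
  qed
  have "(\<Sum>orb\<in>orbits P X \<phi>. \<Sum>y\<in>orb. (if y \<in> F then 0 else 1::nat)) = (\<Sum>y\<in>X. (if y \<in> F then 0 else 1::nat))"
    by (rule disjoint_sum[OF finX])
  also have "\<dots> = card (X - F)"
  proof -
    have "(\<Sum>y\<in>X. (if y \<in> F then 0 else 1::nat)) = (\<Sum>y\<in>X. of_bool (y \<in> X - F))"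
      by (rule sum.cong) auto
    also have "\<dots> = card (X - F)" using finX by (simp add: Diff_eq Compl_eq)
    finally show ?thesis .
  qed
  finally have sumeq: "(\<Sum>orb\<in>orbits P X \<phi>. \<Sum>y\<in>orb. (if y \<in> F then 0 else 1::nat)) = card (X - F)" .
  have "p dvd card (X - F)"
  proof -
    have "p dvd (\<Sum>orb\<in>orbits P X \<phi>. \<Sum>y\<in>orb. (if y \<in> F then 0 else 1::nat))"
      by (rule dvd_sum) (rule inner)
    thus ?thesis using sumeq by simp
  qed
  moreover have "card X = card F + card (X - F)"
  proof -
    have "F \<subseteq> X" unfolding F_def by blast
    thus ?thesis using finX by (metis card_Diff_subset finite_subset card_mono le_add_diff_inverse)
  qed
  ultimately show ?thesis unfolding F_def by (auto elim!: dvdE)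
qed

lemma (in group) gl1: "x \<in> carrier G \<Longrightarrow> y \<in> carrier G \<Longrightarrow> inv x \<otimes> (x \<otimes> y) = y"
  by (simp add: m_assoc[symmetric])
lemma (in group) gl2: "x \<in> carrier G \<Longrightarrow> y \<in> carrier G \<Longrightarrow> x \<otimes> (inv x \<otimes> y) = y"
  by (simp add: m_assoc[symmetric])
lemmas (in group) gsimps = m_assoc inv_mult_group gl1 gl2 inv_inv l_inv r_inv r_one l_one

lemma maxsub_normal:
  assumes grp: "group Q" and fin: "finite (carrier Q)" and ord: "order Q = p ^ k" and pr: "prime p"
    and sub: "subgroup B Q" and ne: "B \<noteq> carrier Q"
    and mx: "\<forall>L. subgroup L Q \<and> B \<subseteq> L \<longrightarrow> L = B \<or> L = carrier Q"
  shows "B \<lhd> Q"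
proof -
  interpret Q: group Q by (rule grp)
  interpret B: subgroup B Q by (rule sub)
  define X where "X = rcosets\<^bsub>Q\<^esub> B"
  have finX: "finite X" unfolding X_def RCOSETS_def
    using fin by (auto intro!: finite_UN_I)
  have lag: "card X * card B = p ^ k" using Q.lagrange[OF sub] ord X_def by simp
  have finB: "finite B" using fin B.subset finite_subset by blast
  have "card X \<noteq> 1"
  proof
    assume "card X = 1"
    hence "card B = card (carrier Q)" using lag ord by (simp add: order_def)
    hence "B = carrier Q" using card_subset_eq[OF fin B.subset] by simp
    thus False using ne by simp
  qed
  moreover have "card X dvd p ^ k" using lag by (metis dvd_triv_left)
  ultimately have pX: "p dvd card X"
  proof -
    obtain i where i: "card X = p ^ i" using divides_primepow_nat[OF pr, of "card X" k] \<open>card X dvd p ^ k\<close> by blast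
    hence "i \<noteq> 0" using \<open>card X \<noteq> 1\<close> by (cases i) auto
    thus ?thesis using i by (cases i) auto
  qed
  define Bg where "Bg = Q\<lparr>carrier := B\<rparr>"
  have gBg: "group Bg" unfolding Bg_def by (rule subgroup.subgroup_is_group[OF sub grp])
  have "card B dvd p ^ k" using lag by (metis dvd_triv_right)
  then obtain j where "card B = p ^ j" using divides_primepow_nat[OF pr, of "card B" k] by blast
  hence ordB: "order Bg = p ^ j" unfolding Bg_def order_def by simp
  define \<phi> where "\<phi> = (\<lambda>b. \<lambda>C\<in>X. C #>\<^bsub>Q\<^esub> inv\<^bsub>Q\<^esub> b)"
  have Xrep: "\<exists>c\<in>carrier Q. C = B #>\<^bsub>Q\<^esub> c" if "C \<in> X" for C
    using that unfolding X_def RCOSETS_def by blast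
  have Xcl: "C #>\<^bsub>Q\<^esub> g \<in> X" if C: "C \<in> X" and g: "g \<in> carrier Q" for C g
  proof -
    obtain c where c: "c \<in> carrier Q" "C = B #>\<^bsub>Q\<^esub> c" using Xrep[OF C] by blast
    have "C #>\<^bsub>Q\<^esub> g = B #>\<^bsub>Q\<^esub> (c \<otimes>\<^bsub>Q\<^esub> g)"
      using c g Q.coset_mult_assoc[OF B.subset] by simp
    thus ?thesis unfolding X_def using Q.rcosetsI[OF B.subset] c g by simp
  qed
  have Xsub: "C \<subseteq> carrier Q" if C: "C \<in> X" for C
    using Xrep[OF C] Q.r_coset_subset_G[OF B.subset] by blast
  have act: "group_action Bg X \<phi>"
    unfolding group_action_def group_hom_def group_hom_axioms_def
  proof (intro conjI gBg group_BijGroup)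
    show "\<phi> \<in> hom Bg (BijGroup X)"
    proof (rule homI)
      have mem: "\<phi> b \<in> Bij X" if "b \<in> B" for b
      proof -
        have b: "b \<in> carrier Q" "inv\<^bsub>Q\<^esub> b \<in> carrier Q" using that B.subset by auto
        have "bij_betw (\<phi> b) X X"
        proof (rule bij_betwI[where g="\<lambda>C. C #>\<^bsub>Q\<^esub> b"])
          show "\<phi> b \<in> X \<rightarrow> X" using Xcl b unfolding \<phi>_def by auto
          show "(\<lambda>C. C #>\<^bsub>Q\<^esub> b) \<in> X \<rightarrow> X" using Xcl b by auto
          show "(\<phi> b x) #>\<^bsub>Q\<^esub> b = x" if "x \<in> X" for x
            using that b Xsub unfolding \<phi>_def by (simp add: Q.coset_mult_assoc Q.coset_mult_one)
          show "\<phi> b (y #>\<^bsub>Q\<^esub> b) = y" if "y \<in> X" for y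
            using that b Xsub Xcl unfolding \<phi>_def by (simp add: Q.coset_mult_assoc Q.coset_mult_one)
        qed
        thus ?thesis unfolding Bij_def \<phi>_def by auto
      qed
      show "\<phi> b \<in> carrier (BijGroup X)" if "b \<in> carrier Bg" for b
        using mem that unfolding Bg_def BijGroup_def by simp
      show "\<phi> (x \<otimes>\<^bsub>Bg\<^esub> y) = \<phi> x \<otimes>\<^bsub>BijGroup X\<^esub> \<phi> y"
        if "x \<in> carrier Bg" "y \<in> carrier Bg" for x y
      proof -
        have xy: "x \<in> B" "y \<in> B" using that unfolding Bg_def by auto
        hence c: "x \<in> carrier Q" "y \<in> carrier Q" using B.subset by auto
        have "\<phi> (x \<otimes>\<^bsub>Q\<^esub> y) = compose X (\<phi> x) (\<phi> y)"
        proof (rule ext)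
          fix C show "\<phi> (x \<otimes>\<^bsub>Q\<^esub> y) C = compose X (\<phi> x) (\<phi> y) C"
          proof (cases "C \<in> X")
            case True
            have "C #>\<^bsub>Q\<^esub> inv\<^bsub>Q\<^esub> (x \<otimes>\<^bsub>Q\<^esub> y) = (C #>\<^bsub>Q\<^esub> inv\<^bsub>Q\<^esub> y) #>\<^bsub>Q\<^esub> inv\<^bsub>Q\<^esub> x"
              using c Xsub[OF True] by (simp add: Q.coset_mult_assoc Q.inv_mult_group)
            thus ?thesis using True Xcl[OF True] c unfolding \<phi>_def compose_def by simp
          next
            case False
            thus ?thesis unfolding \<phi>_def compose_def by simp
          qed
        qed
        thus ?thesis using mem xy unfolding Bg_def BijGroup_def by simp
      qed
    qed
  qed
  define F where "F = {C\<in>X. \<forall>g\<in>carrier Bg. \<phi> g C = C}"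
  have "card X mod p = card F mod p"
    unfolding F_def by (rule pgroup_fix_mod[OF act _ ordB pr finX]) (use finB Bg_def in simp)
  hence pF: "p dvd card F" using pX by (simp add: mod_eq_0_iff_dvd[symmetric])
  have BX: "B \<in> X" unfolding X_def using Q.rcosetsI[OF B.subset Q.one_closed] Q.coset_mult_one[OF B.subset] by simp
  have BF: "B \<in> F" unfolding F_def \<phi>_def Bg_def using BX by (auto simp: B.rcos_const)
  have finF: "finite F" using finX unfolding F_def by simp
  have "card F \<noteq> 0" using BF finF by auto
  hence "card F \<ge> 2" using pF pr by (metis dvd_imp_le not_gr0 prime_ge_2_nat le_trans)
  moreover have "F \<subseteq> {B} \<Longrightarrow> card F \<le> 1" using card_mono[of "{B}" F] by simp
  ultimately have "\<not> F \<subseteq> {B}" by linarith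
  then obtain C where CF: "C \<in> F" and CB: "C \<noteq> B" by blast
  have "C \<in> X" using CF unfolding F_def by blast
  then obtain x where x: "x \<in> carrier Q" and Cx: "C = B #>\<^bsub>Q\<^esub> x"
    using Xrep by blast
  have xB: "x \<notin> B"
  proof
    assume "x \<in> B" hence "C = B" using Cx B.rcos_const by simp
    thus False using CB by simp
  qed
  have conj: "x \<otimes>\<^bsub>Q\<^esub> b \<otimes>\<^bsub>Q\<^esub> inv\<^bsub>Q\<^esub> x \<in> B" if b: "b \<in> B" for b
  proof -
    have ib: "inv\<^bsub>Q\<^esub> b \<in> B" using b by simp
    have "\<phi> (inv\<^bsub>Q\<^esub> b) C = C" using CF ib unfolding F_def Bg_def by auto
    hence eq: "C #>\<^bsub>Q\<^esub> b = C" using CF ib b B.subset unfolding \<phi>_def F_def by (auto simp: Q.inv_inv)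
    have "x \<in> C" using Cx x Q.rcos_self[OF x sub] by simp
    hence "x \<otimes>\<^bsub>Q\<^esub> b \<in> C #>\<^bsub>Q\<^esub> b" unfolding r_coset_def by blast
    hence "x \<otimes>\<^bsub>Q\<^esub> b \<in> B #>\<^bsub>Q\<^esub> x" using eq Cx by simp
    then obtain h where h: "h \<in> B" "x \<otimes>\<^bsub>Q\<^esub> b = h \<otimes>\<^bsub>Q\<^esub> x" unfolding r_coset_def by auto
    hence "x \<otimes>\<^bsub>Q\<^esub> b \<otimes>\<^bsub>Q\<^esub> inv\<^bsub>Q\<^esub> x = h"
      using x B.subset by (simp add: Q.m_assoc subsetD)
    thus ?thesis using h by simp
  qed
  define NB where "NB = {y \<in> carrier Q. \<forall>b\<in>B. y \<otimes>\<^bsub>Q\<^esub> b \<otimes>\<^bsub>Q\<^esub> inv\<^bsub>Q\<^esub> y \<in> B}"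
  have NBsub: "subgroup NB Q"
  proof (rule Q.subgroupI)
    show "NB \<subseteq> carrier Q" unfolding NB_def by blast
    have "\<one>\<^bsub>Q\<^esub> \<in> NB" unfolding NB_def using B.subset by (auto simp: subsetD)
    thus "NB \<noteq> {}" by blast
    show "a \<otimes>\<^bsub>Q\<^esub> c \<in> NB" if an: "a \<in> NB" and cn: "c \<in> NB" for a c
    proof -
      have ac: "a \<in> carrier Q" "c \<in> carrier Q" using an cn unfolding NB_def by auto
      have aN: "\<forall>b\<in>B. a \<otimes>\<^bsub>Q\<^esub> b \<otimes>\<^bsub>Q\<^esub> inv\<^bsub>Q\<^esub> a \<in> B" using an NB_def by blast
      have cN: "\<forall>b\<in>B. c \<otimes>\<^bsub>Q\<^esub> b \<otimes>\<^bsub>Q\<^esub> inv\<^bsub>Q\<^esub> c \<in> B" using cn NB_def by blast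
      have "a \<otimes>\<^bsub>Q\<^esub> c \<otimes>\<^bsub>Q\<^esub> b \<otimes>\<^bsub>Q\<^esub> inv\<^bsub>Q\<^esub> (a \<otimes>\<^bsub>Q\<^esub> c) \<in> B" if b: "b \<in> B" for b
      proof -
        have bc: "b \<in> carrier Q" using b B.subset by blast
        have "c \<otimes>\<^bsub>Q\<^esub> b \<otimes>\<^bsub>Q\<^esub> inv\<^bsub>Q\<^esub> c \<in> B" using cN b by blast
        hence "a \<otimes>\<^bsub>Q\<^esub> (c \<otimes>\<^bsub>Q\<^esub> b \<otimes>\<^bsub>Q\<^esub> inv\<^bsub>Q\<^esub> c) \<otimes>\<^bsub>Q\<^esub> inv\<^bsub>Q\<^esub> a \<in> B"
          using aN by blast
        moreover have "a \<otimes>\<^bsub>Q\<^esub> (c \<otimes>\<^bsub>Q\<^esub> b \<otimes>\<^bsub>Q\<^esub> inv\<^bsub>Q\<^esub> c) \<otimes>\<^bsub>Q\<^esub> inv\<^bsub>Q\<^esub> a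
           = a \<otimes>\<^bsub>Q\<^esub> c \<otimes>\<^bsub>Q\<^esub> b \<otimes>\<^bsub>Q\<^esub> inv\<^bsub>Q\<^esub> (a \<otimes>\<^bsub>Q\<^esub> c)"
          using ac bc by (simp add: Q.m_assoc Q.inv_mult_group)
        ultimately show ?thesis by simp
      qed
      thus ?thesis using ac unfolding NB_def by blast
    qed
    show "inv\<^bsub>Q\<^esub> a \<in> NB" if a: "a \<in> NB" for a
    proof -
      have ac: "a \<in> carrier Q" using a unfolding NB_def by blast
      have aN: "\<forall>b\<in>B. a \<otimes>\<^bsub>Q\<^esub> b \<otimes>\<^bsub>Q\<^esub> inv\<^bsub>Q\<^esub> a \<in> B" using a NB_def by blast
      define f where "f = (\<lambda>b. a \<otimes>\<^bsub>Q\<^esub> b \<otimes>\<^bsub>Q\<^esub> inv\<^bsub>Q\<^esub> a)"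
      have "f ` B \<subseteq> B" using aN unfolding f_def by blast
      moreover have "inj_on f B" unfolding inj_on_def
      proof (intro ballI impI)
        fix b c assume bc: "b \<in> B" "c \<in> B" and eq: "f b = f c"
        have bc': "b \<in> carrier Q" "c \<in> carrier Q" using bc B.subset by auto
        have e1: "inv\<^bsub>Q\<^esub> a \<otimes>\<^bsub>Q\<^esub> f b \<otimes>\<^bsub>Q\<^esub> a = b" unfolding f_def using ac bc'
          by (simp add: Q.gsimps)
        have e2: "inv\<^bsub>Q\<^esub> a \<otimes>\<^bsub>Q\<^esub> f c \<otimes>\<^bsub>Q\<^esub> a = c" unfolding f_def using ac bc'
          by (simp add: Q.gsimps)
        have "b = inv\<^bsub>Q\<^esub> a \<otimes>\<^bsub>Q\<^esub> f b \<otimes>\<^bsub>Q\<^esub> a" using e1 by (rule sym)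
        also have "\<dots> = inv\<^bsub>Q\<^esub> a \<otimes>\<^bsub>Q\<^esub> f c \<otimes>\<^bsub>Q\<^esub> a" using eq by (rule arg_cong)
        also have "\<dots> = c" by (rule e2)
        finally show "b = c" .
      qed
      ultimately have surj: "f ` B = B" by (rule endo_inj_surj[OF finB])
      have "inv\<^bsub>Q\<^esub> a \<otimes>\<^bsub>Q\<^esub> b \<otimes>\<^bsub>Q\<^esub> inv\<^bsub>Q\<^esub> (inv\<^bsub>Q\<^esub> a) \<in> B" if b: "b \<in> B" for b
      proof -
        have "b \<in> f ` B" using surj b by simp
        then obtain c where c: "c \<in> B" "b = f c" by blast
        have cc: "c \<in> carrier Q" using c B.subset by auto
        have "inv\<^bsub>Q\<^esub> a \<otimes>\<^bsub>Q\<^esub> b \<otimes>\<^bsub>Q\<^esub> inv\<^bsub>Q\<^esub> (inv\<^bsub>Q\<^esub> a) = c"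
          unfolding c(2) f_def using ac cc by (simp add: Q.gsimps)
        thus ?thesis using c(1) by (simp only:)
      qed
      thus ?thesis using ac unfolding NB_def by blast
    qed
  qed
  have "B \<subseteq> NB" unfolding NB_def using B.subset by (auto simp: subsetD)
  moreover have "x \<in> NB" unfolding NB_def using x conj by blast
  ultimately have "NB = carrier Q" using mx NBsub xB by blast
  thus ?thesis unfolding Q.normal_inv_iff using sub NB_def by auto
qed

lemma maxsub_pow:
  assumes grp: "group Q" and fin: "finite (carrier Q)" and ord: "order Q = p ^ k" and pr: "prime p"
    and sub: "subgroup B Q" and ne: "B \<noteq> carrier Q"
    and mx: "\<forall>L. subgroup L Q \<and> B \<subseteq> L \<longrightarrow> L = B \<or> L = carrier Q"
    and a: "a \<in> carrier Q"
  shows "a [^]\<^bsub>Q\<^esub> p \<in> B"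
proof -
  interpret Q: group Q by (rule grp)
  interpret B: subgroup B Q by (rule sub)
  have nrm: "B \<lhd> Q" by (rule maxsub_normal[OF grp fin ord pr sub ne mx])
  have conjB: "x \<otimes>\<^bsub>Q\<^esub> h \<otimes>\<^bsub>Q\<^esub> inv\<^bsub>Q\<^esub> x \<in> B" if "x \<in> carrier Q" "h \<in> B" for x h
    using nrm Q.normal_inv_iff that by blast
  define e where "e = (\<lambda>i::int. a [^]\<^bsub>Q\<^esub> (int p * i))"
  have ec: "e i \<in> carrier Q" for i unfolding e_def using a by simp
  have emult: "e i \<otimes>\<^bsub>Q\<^esub> e j = e (i + j)" for i j
    unfolding e_def using Q.int_pow_mult[OF a, of "int p * i" "int p * j"] by (simp add: distrib_left)
  have einv: "inv\<^bsub>Q\<^esub> (e i) = e (- i)" for i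
    unfolding e_def using Q.int_pow_neg[OF a, of "int p * i"] by simp
  have e0: "e 0 = \<one>\<^bsub>Q\<^esub>" unfolding e_def by simp
  have Bc: "b \<in> carrier Q" if "b \<in> B" for b using that B.subset by blast
  define D where "D = {b \<otimes>\<^bsub>Q\<^esub> e i | b i. b \<in> B}"
  have Dsub: "subgroup D Q"
  proof (rule Q.subgroupI)
    show "D \<subseteq> carrier Q" unfolding D_def using Bc ec by blast
    have "\<one>\<^bsub>Q\<^esub> \<otimes>\<^bsub>Q\<^esub> e 0 \<in> D" unfolding D_def using B.one_closed by blast
    thus "D \<noteq> {}" by blast
    show "inv\<^bsub>Q\<^esub> d \<in> D" if d: "d \<in> D" for d
    proof -
      obtain b i where bi: "b \<in> B" "d = b \<otimes>\<^bsub>Q\<^esub> e i" using d unfolding D_def by blast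
      have bc: "b \<in> carrier Q" using Bc bi by blast
      have "inv\<^bsub>Q\<^esub> d = (e (-i) \<otimes>\<^bsub>Q\<^esub> inv\<^bsub>Q\<^esub> b \<otimes>\<^bsub>Q\<^esub> inv\<^bsub>Q\<^esub> (e (-i))) \<otimes>\<^bsub>Q\<^esub> e (-i)"
        using bc ec[of i] ec[of "-i"] unfolding bi(2) einv[symmetric] by (simp add: Q.gsimps)
      moreover have "e (-i) \<otimes>\<^bsub>Q\<^esub> inv\<^bsub>Q\<^esub> b \<otimes>\<^bsub>Q\<^esub> inv\<^bsub>Q\<^esub> (e (-i)) \<in> B"
        using conjB[OF ec] bi(1) by simp
      ultimately show ?thesis unfolding D_def by blast
    qed
    show "d1 \<otimes>\<^bsub>Q\<^esub> d2 \<in> D" if d1: "d1 \<in> D" and d2: "d2 \<in> D" for d1 d2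
    proof -
      obtain b1 i where b1: "b1 \<in> B" "d1 = b1 \<otimes>\<^bsub>Q\<^esub> e i" using d1 unfolding D_def by blast
      obtain b2 j where b2: "b2 \<in> B" "d2 = b2 \<otimes>\<^bsub>Q\<^esub> e j" using d2 unfolding D_def by blast
      have bc: "b1 \<in> carrier Q" "b2 \<in> carrier Q" using Bc b1 b2 by auto
      have "d1 \<otimes>\<^bsub>Q\<^esub> d2 = (b1 \<otimes>\<^bsub>Q\<^esub> (e i \<otimes>\<^bsub>Q\<^esub> b2 \<otimes>\<^bsub>Q\<^esub> inv\<^bsub>Q\<^esub> (e i))) \<otimes>\<^bsub>Q\<^esub> (e i \<otimes>\<^bsub>Q\<^esub> e j)"
        using bc ec[of i] ec[of j] unfolding b1(2) b2(2) by (simp add: Q.gsimps)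
      also have "\<dots> = (b1 \<otimes>\<^bsub>Q\<^esub> (e i \<otimes>\<^bsub>Q\<^esub> b2 \<otimes>\<^bsub>Q\<^esub> inv\<^bsub>Q\<^esub> (e i))) \<otimes>\<^bsub>Q\<^esub> e (i + j)"
        by (simp only: emult)
      finally have eq: "d1 \<otimes>\<^bsub>Q\<^esub> d2 = (b1 \<otimes>\<^bsub>Q\<^esub> (e i \<otimes>\<^bsub>Q\<^esub> b2 \<otimes>\<^bsub>Q\<^esub> inv\<^bsub>Q\<^esub> (e i))) \<otimes>\<^bsub>Q\<^esub> e (i + j)" .
      have "b1 \<otimes>\<^bsub>Q\<^esub> (e i \<otimes>\<^bsub>Q\<^esub> b2 \<otimes>\<^bsub>Q\<^esub> inv\<^bsub>Q\<^esub> (e i)) \<in> B"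
        using conjB[OF ec b2(1)] b1(1) by simp
      thus ?thesis using eq unfolding D_def by blast
    qed
  qed
  have BD: "B \<subseteq> D"
  proof
    fix b assume b: "b \<in> B"
    have "b = b \<otimes>\<^bsub>Q\<^esub> e 0" using Bc[OF b] e0 by simp
    thus "b \<in> D" unfolding D_def using b by blast
  qed
  have e1: "e 1 = a [^]\<^bsub>Q\<^esub> p" unfolding e_def by (simp add: int_pow_int)
  show ?thesis
  proof (cases "D = B")
    case True
    have "\<one>\<^bsub>Q\<^esub> \<otimes>\<^bsub>Q\<^esub> e 1 \<in> D" unfolding D_def using B.one_closed by blast
    thus ?thesis using True e1 ec[of 1] by (simp del: Q.l_one add: Q.l_one[OF Q.nat_pow_closed[OF a]])
  next
    case False
    hence "D = carrier Q" using mx Dsub BD by blast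
    hence "a \<in> D" using a by simp
    then obtain b i where bi: "b \<in> B" "a = b \<otimes>\<^bsub>Q\<^esub> e i" unfolding D_def by blast
    have "a \<otimes>\<^bsub>Q\<^esub> e (-i) = b \<otimes>\<^bsub>Q\<^esub> (e i \<otimes>\<^bsub>Q\<^esub> e (-i))"
      using Bc[OF bi(1)] ec Q.m_assoc[of b "e i" "e (-i)"] bi(2) by simp
    also have "\<dots> = b" using Bc[OF bi(1)] emult[of i "-i"] e0 by simp
    finally have "a \<otimes>\<^bsub>Q\<^esub> e (-i) \<in> B" using bi(1) by simp
    moreover have "a \<otimes>\<^bsub>Q\<^esub> e (-i) = a [^]\<^bsub>Q\<^esub> (1 - int p * i)"
      unfolding e_def using Q.int_pow_mult[OF a, of 1 "int p * (-i)"] a by simp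
    ultimately have x1: "a [^]\<^bsub>Q\<^esub> (1 - int p * i) \<in> B" by simp
    have x2': "a [^]\<^bsub>Q\<^esub> (p ^ k) = \<one>\<^bsub>Q\<^esub>"
      using Q.pow_order_eq_1[OF a] ord by simp
    have "a [^]\<^bsub>Q\<^esub> (int p ^ k) = \<one>\<^bsub>Q\<^esub>"
      using int_pow_int[of Q a "p ^ k"] x2' by simp
    hence x2: "a [^]\<^bsub>Q\<^esub> (int p ^ k) \<in> B" by simp
    have "coprime (1 - int p * i) (int p)"
    proof (rule coprimeI)
      fix c assume c1: "c dvd 1 - int p * i" and c2: "c dvd int p"
      have "c dvd int p * i" using c2 by (rule dvd_mult2)
      hence "c dvd (1 - int p * i) + int p * i" using c1 by (rule dvd_add[rotated])
      hence "c dvd 1" by simp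
      thus "is_unit c" by assumption
    qed
    hence "coprime (1 - int p * i) (int p ^ k)" by simp
    hence "gcd (1 - int p * i) (int p ^ k) = 1" by simp
    then obtain u v where uv: "u * (1 - int p * i) + v * (int p ^ k) = 1"
      using bezout_int[of "1 - int p * i" "int p ^ k"] by auto
    have "a = a [^]\<^bsub>Q\<^esub> (1::int)" using a by simp
    also have "\<dots> = a [^]\<^bsub>Q\<^esub> ((1 - int p * i) * u + (int p ^ k) * v)" using uv by (simp add: mult.commute)
    also have "\<dots> = (a [^]\<^bsub>Q\<^esub> (1 - int p * i)) [^]\<^bsub>Q\<^esub> u \<otimes>\<^bsub>Q\<^esub> (a [^]\<^bsub>Q\<^esub> (int p ^ k)) [^]\<^bsub>Q\<^esub> v"
      using a by (simp add: Q.int_pow_mult Q.int_pow_pow)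
    finally have aeq: "a = (a [^]\<^bsub>Q\<^esub> (1 - int p * i)) [^]\<^bsub>Q\<^esub> u \<otimes>\<^bsub>Q\<^esub> (a [^]\<^bsub>Q\<^esub> (int p ^ k)) [^]\<^bsub>Q\<^esub> v" .
    have "a \<in> B" by (subst aeq, rule B.m_closed[OF Q.subgroup_int_pow_closed[OF sub x1] Q.subgroup_int_pow_closed[OF sub x2]])
    thus ?thesis using Q.subgroup_int_pow_closed[OF sub, of a "int p"] by (simp add: int_pow_int)
  qed
qed

locale ppg =
  fixes p :: nat and G :: "('a, 'b) monoid_scheme" (structure) and T :: "'a topology"
  assumes ppg: "pro_p_group p G T"
begin

lemma grp: "group G" using ppg by (simp add: pro_p_group_def topgroup_def)

sublocale group G by (rule grp)

lemma tsp: "topspace T = carrier G" using ppg by (simp add: pro_p_group_def topgroup_def)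
lemma mc: "continuous_map (prod_topology T T) T (\<lambda>(x, y). x \<otimes> y)"
  using ppg by (simp add: pro_p_group_def topgroup_def)
lemma ic: "continuous_map T T (\<lambda>x. inv x)" using ppg by (simp add: pro_p_group_def topgroup_def)
lemma cpt: "compact_space T" using ppg by (simp add: pro_p_group_def)
lemma hs: "Hausdorff_space T" using ppg by (simp add: pro_p_group_def)
lemma td: "\<forall>x\<in>topspace T. connected_component_of_set T x = {x}" using ppg by (simp add: pro_p_group_def)
lemma pidx: "N \<lhd> G \<Longrightarrow> openin T N \<Longrightarrow> \<exists>k::nat. card (rcosets N) = p ^ k"
  using ppg by (simp add: pro_p_group_def)
lemma pr: "prime p" using ppg by (simp add: pro_p_group_def)

lemma cm_mult: "continuous_map X T f \<Longrightarrow> continuous_map X T g \<Longrightarrow> continuous_map X T (\<lambda>x. f x \<otimes> g x)"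
proof -
  assume f: "continuous_map X T f" and g: "continuous_map X T g"
  have "continuous_map X (prod_topology T T) (\<lambda>x. (f x, g x))" by (rule continuous_map_pairedI[OF f g])
  from continuous_map_compose[OF this mc] show ?thesis by (simp add: o_def)
qed

lemma cm_inv: "continuous_map X T f \<Longrightarrow> continuous_map X T (\<lambda>x. inv (f x))"
proof -
  assume f: "continuous_map X T f"
  from continuous_map_compose[OF f ic] show ?thesis by (simp add: o_def)
qed

lemma cm_const: "c \<in> carrier G \<Longrightarrow> continuous_map X T (\<lambda>x. c)"
  by (simp add: continuous_map_const tsp)

lemma cm_id: "continuous_map T T (\<lambda>x. x)"
  using continuous_map_id[of T] by (simp add: id_def)

lemma open_pre: "continuous_map T T f \<Longrightarrow> openin T U \<Longrightarrow> openin T {x \<in> carrier G. f x \<in> U}"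
  using openin_continuous_map_preimage[of T T f U] tsp by simp

lemma closed_pre: "continuous_map T T f \<Longrightarrow> closedin T U \<Longrightarrow> closedin T {x \<in> carrier G. f x \<in> U}"
  using closedin_continuous_map_preimage[of T T f U] tsp by simp

lemma cm_lmult: "g \<in> carrier G \<Longrightarrow> continuous_map T T (\<lambda>x. g \<otimes> x)"
  by (rule cm_mult[OF cm_const cm_id])

lemma cm_rmult: "g \<in> carrier G \<Longrightarrow> continuous_map T T (\<lambda>x. x \<otimes> g)"
  by (rule cm_mult[OF cm_id cm_const])

lemma closure_subgroup:
  assumes A: "subgroup A G"
  shows "subgroup (T closure_of A) G"
proof -
  let ?C = "T closure_of A"
  have Asub: "A \<subseteq> topspace T" using subgroup.subset[OF A] tsp by simp
  have AC: "A \<subseteq> ?C" by (rule closure_of_subset[OF Asub])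
  have Csub: "?C \<subseteq> carrier G" using closure_of_subset_topspace[of T A] tsp by simp
  have lm: "a \<otimes> c \<in> ?C" if a: "a \<in> A" and c: "c \<in> ?C" for a c
  proof -
    have ac: "a \<in> carrier G" using a subgroup.subset[OF A] by blast
    have "(\<lambda>x. a \<otimes> x) ` ?C \<subseteq> T closure_of ((\<lambda>x. a \<otimes> x) ` A)"
      by (rule continuous_map_image_closure_subset[OF cm_lmult[OF ac]])
    also have "\<dots> \<subseteq> ?C"
      by (rule closure_of_mono) (use a subgroup.m_closed[OF A] in blast)
    finally show ?thesis using c by blast
  qed
  have rm: "d \<otimes> c \<in> ?C" if d: "d \<in> ?C" and c: "c \<in> ?C" for d c
  proof -
    have cc: "c \<in> carrier G" using c Csub by blast
    have "(\<lambda>x. x \<otimes> c) ` ?C \<subseteq> T closure_of ((\<lambda>x. x \<otimes> c) ` A)"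
      by (rule continuous_map_image_closure_subset[OF cm_rmult[OF cc]])
    also have "\<dots> \<subseteq> T closure_of ?C"
      by (rule closure_of_mono) (use lm c in blast)
    also have "\<dots> = ?C" by (rule closure_of_closure_of)
    finally show ?thesis using d by blast
  qed
  have iv: "inv c \<in> ?C" if c: "c \<in> ?C" for c
  proof -
    have "(\<lambda>x. inv x) ` ?C \<subseteq> T closure_of ((\<lambda>x. inv x) ` A)"
      by (rule continuous_map_image_closure_subset[OF ic])
    also have "\<dots> \<subseteq> ?C"
      by (rule closure_of_mono) (use subgroup.m_inv_closed[OF A] in blast)
    finally show ?thesis using c by blast
  qed
  show ?thesis
  proof (rule subgroupI)
    show "?C \<subseteq> carrier G" by (rule Csub)
    show "?C \<noteq> {}" using AC subgroup.one_closed[OF A] by blast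
  qed (use rm iv in auto)
qed

lemma sub_nbhd:
  assumes W: "openin T W" and h: "h \<in> carrier G"
  shows "openin (subtopology T H) (H \<inter> {y \<in> carrier G. inv h \<otimes> y \<in> W})"
proof -
  have "openin T {y \<in> carrier G. inv h \<otimes> y \<in> W}"
    by (rule open_pre[OF cm_lmult W]) (use h in simp)
  thus ?thesis unfolding openin_subtopology by blast
qed

lemma open_sub_closed:
  assumes H: "subgroup H G" "closedin T H" and L: "subgroup L G" "L \<subseteq> H"
    and Lo: "openin (subtopology T H) L"
  shows "closedin T L"
proof -
  obtain W where W: "openin T W" "L = W \<inter> H" using Lo[unfolded openin_subtopology] by blast
  have Hc: "H \<subseteq> carrier G" using subgroup.subset[OF H(1)] .
  have "openin (subtopology T H) (H - L)"
  proof (subst openin_subopen, intro ballI)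
    fix x assume x: "x \<in> H - L"
    have xc: "x \<in> carrier G" using x Hc by blast
    let ?O = "H \<inter> {y \<in> carrier G. inv x \<otimes> y \<in> W}"
    have "openin (subtopology T H) ?O" by (rule sub_nbhd[OF W(1) xc])
    moreover have "x \<in> ?O" using x xc W(2) subgroup.one_closed[OF L(1)] by auto
    moreover have "?O \<subseteq> H - L"
    proof
      fix y assume y: "y \<in> ?O"
      show "y \<in> H - L"
      proof (rule ccontr)
        assume "y \<notin> H - L"
        hence yL: "y \<in> L" using y by blast
        have yc: "y \<in> carrier G" using y by blast
        have "inv x \<otimes> y \<in> H" using x yL L(2) subgroup.m_closed[OF H(1)] subgroup.m_inv_closed[OF H(1)] by blast
        hence "inv x \<otimes> y \<in> L" using y W(2) by blast
        hence "y \<otimes> inv (inv x \<otimes> y) \<in> L" using yL subgroup.m_closed[OF L(1)] subgroup.m_inv_closed[OF L(1)] by blast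
        moreover have "y \<otimes> inv (inv x \<otimes> y) = x" using xc yc by (simp add: gsimps)
        ultimately show False using x by simp
      qed
    qed
    ultimately show "\<exists>T'. openin (subtopology T H) T' \<and> x \<in> T' \<and> T' \<subseteq> H - L" by blast
  qed
  moreover have "topspace (subtopology T H) = H" using Hc tsp topspace_subtopology_subset[of H T] by simp
  ultimately have "closedin (subtopology T H) L" unfolding closedin_def using L(2) by simp
  thus ?thesis by (rule closedin_trans_full[OF _ H(2)])
qed

lemma open_super:
  assumes H: "subgroup H G" and L: "subgroup L G" and L': "subgroup L' G" "L \<subseteq> L'" "L' \<subseteq> H"
    and Lo: "openin (subtopology T H) L"
  shows "openin (subtopology T H) L'"
proof -
  obtain W where W: "openin T W" "L = W \<inter> H" using Lo[unfolded openin_subtopology] by blast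
  have Hc: "H \<subseteq> carrier G" using subgroup.subset[OF H] .
  show ?thesis
  proof (subst openin_subopen, intro ballI)
    fix x assume x: "x \<in> L'"
    have xc: "x \<in> carrier G" using x L'(3) Hc by blast
    let ?O = "H \<inter> {y \<in> carrier G. inv x \<otimes> y \<in> W}"
    have "openin (subtopology T H) ?O" by (rule sub_nbhd[OF W(1) xc])
    moreover have "x \<in> ?O" using x xc W(2) subgroup.one_closed[OF L] L'(3) by auto
    moreover have "?O \<subseteq> L'"
    proof
      fix y assume y: "y \<in> ?O"
      have yc: "y \<in> carrier G" using y by blast
      have "inv x \<otimes> y \<in> H" using x y L'(3) subgroup.m_closed[OF H] subgroup.m_inv_closed[OF H] by blast
      hence "inv x \<otimes> y \<in> L'" using y W(2) L'(2) by blast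
      hence "x \<otimes> (inv x \<otimes> y) \<in> L'" using x subgroup.m_closed[OF L'(1)] by blast
      thus "y \<in> L'" using xc yc by (simp add: gsimps)
    qed
    ultimately show "\<exists>T'. openin (subtopology T H) T' \<and> x \<in> T' \<and> T' \<subseteq> L'" by blast
  qed
qed

end

context ppg begin

lemma clopen_nbhd:
  assumes W: "openin T W" "\<one> \<in> W"
  obtains U where "openin T U" "closedin T U" "\<one> \<in> U" "U \<subseteq> W"
proof -
  have oc: "\<one> \<in> topspace T" using tsp by simp
  have "connected_component_of_set T \<one> = {\<one>}" using td oc by blast
  hence comp: "{\<one>} \<in> connected_components_of T"
    unfolding connected_components_of_def using oc by (metis image_eqI)
  have cs: "compactin T {\<one>}" using oc by simp
  have sub: "{\<one>} \<subseteq> W" using W(2) by simp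
  obtain U V where UV: "openin T U" "openin T V" "disjnt U V" "U \<union> V = topspace T" "{\<one>} \<subseteq> U" "U \<subseteq> W"
    using wilder_locally_compact_component_thm[OF compact_imp_locally_compact_space[OF cpt] hs comp cs W(1) sub]
    by blast
  have "topspace T - U = V" using UV(3,4) by (auto simp: disjnt_def)
  hence "closedin T U" unfolding closedin_def using UV(1,2) openin_subset[OF UV(1)] by simp
  thus thesis using that UV by blast
qed

lemma open_subgroup_in:
  assumes U: "openin T U" "closedin T U" "\<one> \<in> U"
  obtains S where "subgroup S G" "openin T S" "S \<subseteq> U"
proof -
  define Wm where "Wm = {z \<in> topspace (prod_topology T T). (\<lambda>(x, y). x \<otimes> y) z \<in> U}"
  have Uc: "U \<subseteq> carrier G" using openin_subset[OF U(1)] tsp by simp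
  have o1: "openin (prod_topology T T) Wm" unfolding Wm_def by (rule openin_continuous_map_preimage[OF mc U(1)])
  have o2: "compactin T U" by (rule closedin_compact_space[OF cpt U(2)])
  have o3: "\<one> \<in> topspace T" by (simp add: tsp)
  have o4: "U \<times> {\<one>} \<subseteq> Wm" unfolding Wm_def using Uc tsp by auto
  obtain U1 V where UV: "openin T U1" "openin T V" "U \<subseteq> U1" "\<one> \<in> V" "U1 \<times> V \<subseteq> Wm"
    using tube_lemma_left[OF o1 o2 o3 o4] by blast
  have Vc: "V \<subseteq> carrier G" using openin_subset[OF UV(2)] tsp by simp
  have UVp: "u \<otimes> b \<in> U" if "u \<in> U" "b \<in> V" for u b
  proof -
    have "(u, b) \<in> Wm" using UV(3,5) that by blast
    thus ?thesis unfolding Wm_def by simp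
  qed
  define S where "S = {g \<in> carrier G. \<forall>u\<in>U. u \<otimes> g \<in> U \<and> u \<otimes> inv g \<in> U}"
  have Ssub: "subgroup S G"
  proof (rule subgroupI)
    show "S \<subseteq> carrier G" unfolding S_def by blast
    have "\<one> \<in> S" unfolding S_def using Uc by (auto simp: subsetD)
    thus "S \<noteq> {}" by blast
    show "inv a \<in> S" if a: "a \<in> S" for a using a unfolding S_def by auto
    show "a \<otimes> b \<in> S" if a: "a \<in> S" and b: "b \<in> S" for a b
    proof -
      have ab: "a \<in> carrier G" "b \<in> carrier G" using a b unfolding S_def by auto
      have "u \<otimes> (a \<otimes> b) \<in> U \<and> u \<otimes> inv (a \<otimes> b) \<in> U" if u: "u \<in> U" for u
      proof -
        have uc: "u \<in> carrier G" using u Uc by blast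
        have "u \<otimes> a \<in> U" using a u unfolding S_def by blast
        hence "u \<otimes> a \<otimes> b \<in> U" using b unfolding S_def by blast
        moreover have "u \<otimes> inv b \<in> U" using b u unfolding S_def by blast
        hence "u \<otimes> inv b \<otimes> inv a \<in> U" using a unfolding S_def by blast
        ultimately show ?thesis using uc ab by (simp add: m_assoc inv_mult_group)
      qed
      thus ?thesis using ab unfolding S_def by blast
    qed
  qed
  have SU: "S \<subseteq> U"
  proof
    fix g assume g: "g \<in> S"
    hence "\<one> \<otimes> g \<in> U" using U(3) unfolding S_def by blast
    thus "g \<in> U" using g unfolding S_def by simp
  qed
  have So: "openin T S"
  proof (subst openin_subopen, intro ballI)
    fix s assume s: "s \<in> S"
    have sc: "s \<in> carrier G" using s unfolding S_def by blast
    let ?O = "{g \<in> carrier G. inv s \<otimes> g \<in> V} \<inter> {g \<in> carrier G. inv (inv s \<otimes> g) \<in> V}"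
    have "openin T ?O"
    proof (rule openin_Int)
      show "openin T {g \<in> carrier G. inv s \<otimes> g \<in> V}"
        by (rule open_pre[OF cm_lmult UV(2)]) (use sc in simp)
      show "openin T {g \<in> carrier G. inv (inv s \<otimes> g) \<in> V}"
        by (rule open_pre[OF cm_inv[OF cm_lmult] UV(2)]) (use sc in simp)
    qed
    moreover have "s \<in> ?O" using sc UV(4) by simp
    moreover have "?O \<subseteq> S"
    proof
      fix g assume g: "g \<in> ?O"
      have gc: "g \<in> carrier G" using g by blast
      have b1: "inv s \<otimes> g \<in> V" and b2: "inv (inv s \<otimes> g) \<in> V" using g by auto
      have "u \<otimes> g \<in> U \<and> u \<otimes> inv g \<in> U" if u: "u \<in> U" for u
      proof -
        have uc: "u \<in> carrier G" using u Uc by blast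
        have "u \<otimes> s \<in> U" using s u unfolding S_def by blast
        hence "u \<otimes> s \<otimes> (inv s \<otimes> g) \<in> U" using UVp b1 by blast
        moreover have "u \<otimes> s \<otimes> (inv s \<otimes> g) = u \<otimes> g" using uc sc gc by (simp add: gsimps)
        moreover have "u \<otimes> inv (inv s \<otimes> g) \<in> U" using UVp u b2 by blast
        hence "u \<otimes> inv (inv s \<otimes> g) \<otimes> inv s \<in> U" using s unfolding S_def by blast
        moreover have "u \<otimes> inv (inv s \<otimes> g) \<otimes> inv s = u \<otimes> inv g" using uc sc gc by (simp add: gsimps)
        ultimately show ?thesis by simp
      qed
      thus "g \<in> S" using gc unfolding S_def by blast
    qed
    ultimately show "\<exists>T'. openin T T' \<and> s \<in> T' \<and> T' \<subseteq> S" by blast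
  qed
  show thesis using that Ssub So SU by blast
qed

lemma open_normal_in:
  assumes V: "subgroup V G" "openin T V"
  obtains N where "N \<lhd> G" "openin T N" "N \<subseteq> V"
proof -
  interpret V: subgroup V G by (rule V(1))
  have rc_eq: "V #> g = {x \<in> carrier G. x \<otimes> inv g \<in> V}" if g: "g \<in> carrier G" for g
  proof
    show "V #> g \<subseteq> {x \<in> carrier G. x \<otimes> inv g \<in> V}"
    proof
      fix x assume "x \<in> V #> g"
      then obtain v where v: "v \<in> V" "x = v \<otimes> g" unfolding r_coset_def by blast
      have vc: "v \<in> carrier G" using v V.subset by blast
      have "x \<otimes> inv g = v" using v vc g by (simp add: gsimps)
      thus "x \<in> {x \<in> carrier G. x \<otimes> inv g \<in> V}" using v vc g by simp
    qed
    show "{x \<in> carrier G. x \<otimes> inv g \<in> V} \<subseteq> V #> g"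
    proof
      fix x assume x: "x \<in> {x \<in> carrier G. x \<otimes> inv g \<in> V}"
      have "x = (x \<otimes> inv g) \<otimes> g" using x g by (simp add: gsimps)
      thus "x \<in> V #> g" using x unfolding r_coset_def by blast
    qed
  qed
  have rc_open: "openin T (V #> g)" if g: "g \<in> carrier G" for g
    unfolding rc_eq[OF g] by (rule open_pre[OF cm_rmult V(2)]) (use g in simp)
  define Rs where "Rs = rcosets V"
  have fin: "finite Rs"
  proof -
    have "compactin T (topspace T)" using cpt by (simp add: compact_space_def)
    moreover have "\<forall>R\<in>Rs. openin T R" using rc_open unfolding Rs_def RCOSETS_def by blast
    moreover have "topspace T \<subseteq> \<Union> Rs"
    proof
      fix x assume "x \<in> topspace T"
      hence x: "x \<in> carrier G" using tsp by simp
      hence "x \<in> V #> x" by (rule rcos_self[OF _ V(1)])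
      moreover have "V #> x \<in> Rs" unfolding Rs_def using x by (rule rcosetsI[OF V.subset])
      ultimately show "x \<in> \<Union> Rs" by blast
    qed
    ultimately obtain F where F: "finite F" "F \<subseteq> Rs" "topspace T \<subseteq> \<Union> F"
      unfolding compactin_def by meson
    have "Rs \<subseteq> F"
    proof
      fix R assume "R \<in> Rs"
      then obtain g where g: "g \<in> carrier G" "R = V #> g" unfolding Rs_def RCOSETS_def by blast
      have "g \<in> \<Union> F" using F(3) g tsp by blast
      then obtain R' where R': "R' \<in> F" "g \<in> R'" by blast
      then obtain g' where g': "g' \<in> carrier G" "R' = V #> g'" using F(2) unfolding Rs_def RCOSETS_def by blast
      have "V #> g' = V #> g" using repr_independence[OF _ g'(1) V(1)] R'(2) g'(2) by simp
      thus "R \<in> F" using R'(1) g g' by simp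
    qed
    thus ?thesis using F(1) finite_subset by blast
  qed
  define P where "P g = {x \<in> carrier G. g \<otimes> x \<otimes> inv g \<in> V}" for g
  have Popen: "openin T (P g)" if g: "g \<in> carrier G" for g
    unfolding P_def by (rule open_pre[OF cm_mult[OF cm_lmult cm_const] V(2)]) (use g in simp_all)
  have Pshift: "P g \<subseteq> P (v \<otimes> g)" if v: "v \<in> V" and g: "g \<in> carrier G" for v g
  proof
    fix x assume x: "x \<in> P g"
    have vc: "v \<in> carrier G" using v V.subset by blast
    have xc: "x \<in> carrier G" using x unfolding P_def by blast
    have "v \<otimes> (g \<otimes> x \<otimes> inv g) \<otimes> inv v \<in> V" using x v unfolding P_def by blast
    moreover have "v \<otimes> (g \<otimes> x \<otimes> inv g) \<otimes> inv v = (v \<otimes> g) \<otimes> x \<otimes> inv (v \<otimes> g)"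
      using vc g xc by (simp add: gsimps)
    ultimately show "x \<in> P (v \<otimes> g)" using xc unfolding P_def by simp
  qed
  have Pcos: "P g = P g'" if g: "g \<in> carrier G" "g' \<in> carrier G" "V #> g = V #> g'" for g g'
  proof -
    have "g' \<in> V #> g" using rcos_self[OF g(2) V(1)] g(3) by simp
    then obtain v where v: "v \<in> V" "g' = v \<otimes> g" unfolding r_coset_def by blast
    have vc: "v \<in> carrier G" using v V.subset by blast
    have "P g \<subseteq> P g'" using Pshift[OF v(1) g(1)] v(2) by simp
    moreover have "P g' \<subseteq> P (inv v \<otimes> g')" using Pshift[OF V.m_inv_closed[OF v(1)] g(2)] .
    moreover have "inv v \<otimes> g' = g" using v vc g by (simp add: gsimps)
    ultimately show ?thesis by auto
  qed
  define rep where "rep R = (SOME g. g \<in> carrier G \<and> R = V #> g)" for R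
  have "P ` carrier G \<subseteq> (\<lambda>R. P (rep R)) ` Rs"
  proof
    fix Y assume "Y \<in> P ` carrier G"
    then obtain g where g: "g \<in> carrier G" "Y = P g" by blast
    have ex: "\<exists>h. h \<in> carrier G \<and> V #> g = V #> h" using g by blast
    have r: "rep (V #> g) \<in> carrier G \<and> V #> g = V #> rep (V #> g)"
      unfolding rep_def by (rule someI_ex[OF ex])
    have "Y = P (rep (V #> g))" using Pcos[OF g(1)] r g(2) by blast
    moreover have "V #> g \<in> Rs" unfolding Rs_def using g(1) by (rule rcosetsI[OF V.subset])
    ultimately show "Y \<in> (\<lambda>R. P (rep R)) ` Rs" by blast
  qed
  hence finP: "finite (P ` carrier G)" using fin finite_subset by blast
  define N where "N = {y \<in> carrier G. \<forall>g\<in>carrier G. g \<otimes> y \<otimes> inv g \<in> V}"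
  have NP: "N = \<Inter> (P ` carrier G)" unfolding N_def P_def by auto
  have No: "openin T N" unfolding NP
    by (rule openin_Inter[OF finP]) (use Popen in auto)
  have NV: "N \<subseteq> V"
  proof
    fix y assume y: "y \<in> N"
    hence yc: "y \<in> carrier G" unfolding N_def by blast
    have "\<one> \<otimes> y \<otimes> inv \<one> \<in> V" using y one_closed unfolding N_def by blast
    thus "y \<in> V" using yc by simp
  qed
  have Ns: "subgroup N G"
  proof (rule subgroupI)
    show "N \<subseteq> carrier G" unfolding N_def by blast
    have "\<one> \<in> N" unfolding N_def by simp
    thus "N \<noteq> {}" by blast
    show "inv a \<in> N" if a: "a \<in> N" for a
    proof -
      have ac: "a \<in> carrier G" using a unfolding N_def by blast
      have "g \<otimes> inv a \<otimes> inv g \<in> V" if g: "g \<in> carrier G" for g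
      proof -
        have "inv (g \<otimes> a \<otimes> inv g) \<in> V" using a g unfolding N_def by blast
        moreover have "inv (g \<otimes> a \<otimes> inv g) = g \<otimes> inv a \<otimes> inv g" using ac g by (simp add: gsimps)
        ultimately show ?thesis by simp
      qed
      thus ?thesis using ac unfolding N_def by blast
    qed
    show "a \<otimes> b \<in> N" if a: "a \<in> N" and b: "b \<in> N" for a b
    proof -
      have ab: "a \<in> carrier G" "b \<in> carrier G" using a b unfolding N_def by auto
      have "g \<otimes> (a \<otimes> b) \<otimes> inv g \<in> V" if g: "g \<in> carrier G" for g
      proof -
        have "(g \<otimes> a \<otimes> inv g) \<otimes> (g \<otimes> b \<otimes> inv g) \<in> V" using a b g unfolding N_def by blast
        moreover have "(g \<otimes> a \<otimes> inv g) \<otimes> (g \<otimes> b \<otimes> inv g) = g \<otimes> (a \<otimes> b) \<otimes> inv g" using ab g by (simp add: gsimps)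
        ultimately show ?thesis by simp
      qed
      thus ?thesis using ab unfolding N_def by blast
    qed
  qed
  have Nn: "N \<lhd> G"
    unfolding normal_inv_iff
  proof (intro conjI Ns ballI)
    fix x h assume x: "x \<in> carrier G" and h: "h \<in> N"
    have hc: "h \<in> carrier G" using h unfolding N_def by blast
    have "g \<otimes> (x \<otimes> h \<otimes> inv x) \<otimes> inv g \<in> V" if g: "g \<in> carrier G" for g
    proof -
      have "(g \<otimes> x) \<otimes> h \<otimes> inv (g \<otimes> x) \<in> V" using h g x unfolding N_def by blast
      moreover have "(g \<otimes> x) \<otimes> h \<otimes> inv (g \<otimes> x) = g \<otimes> (x \<otimes> h \<otimes> inv x) \<otimes> inv g" using x hc g by (simp add: gsimps)
      ultimately show ?thesis by simp
    qed
    thus "x \<otimes> h \<otimes> inv x \<in> N" using x hc unfolding N_def by blast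
  qed
  show thesis using that Nn No NV by blast
qed

lemma open_normal_nbhd:
  assumes "openin T W" "\<one> \<in> W"
  obtains N where "N \<lhd> G" "openin T N" "N \<subseteq> W"
proof -
  obtain U where U: "openin T U" "closedin T U" "\<one> \<in> U" "U \<subseteq> W" using clopen_nbhd[OF assms] by blast
  obtain S where S: "subgroup S G" "openin T S" "S \<subseteq> U" using open_subgroup_in[OF U(1-3)] by blast
  obtain N where N: "N \<lhd> G" "openin T N" "N \<subseteq> S" using open_normal_in[OF S(1,2)] by blast
  show thesis using that N S U by blast
qed

end

context ppg begin

lemma sub_nat_pow: "subgroup H G \<Longrightarrow> h \<in> H \<Longrightarrow> h [^] (n::nat) \<in> H"
  using subgroup_int_pow_closed[of H h "int n"] by (simp add: int_pow_int)

lemma pow_in_max: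
  assumes H: "subgroup H G" and M: "maximal_open_subgroup G T H M" and h: "h \<in> H"
  shows "h [^] p \<in> M"
proof -
  have Ms: "subgroup M G" and MH: "M \<subset> H" and Mo: "openin (subtopology T H) M"
    and Mmax: "\<And>L. subgroup L G \<Longrightarrow> M \<subseteq> L \<Longrightarrow> L \<subset> H \<Longrightarrow> openin (subtopology T H) L \<Longrightarrow> L = M"
    using M unfolding maximal_open_subgroup_def by blast+
  obtain W where W: "openin T W" "M = W \<inter> H" using Mo[unfolded openin_subtopology] by blast
  have oW: "\<one> \<in> W" using W(2) subgroup.one_closed[OF Ms] by blast
  obtain N where N: "N \<lhd> G" "openin T N" "N \<subseteq> W" using open_normal_nbhd[OF W(1) oW] by blast
  interpret N: normal N G by (rule N(1))
  have HNM: "H \<inter> N \<subseteq> M" using N(3) W(2) by blast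
  have Hc: "H \<subseteq> carrier G" using subgroup.subset[OF H] .
  have backr: "y \<in> M" if y: "y \<in> H" and m: "m \<in> M" and yeq: "N #> y = N #> m" for y m
  proof -
    have yc: "y \<in> carrier G" using y Hc by blast
    have mc: "m \<in> carrier G" using m subgroup.subset[OF Ms] by blast
    have "y \<in> N #> m" using rcos_self[OF yc N.subgroup_axioms] yeq by simp
    then obtain n where n: "n \<in> N" "y = n \<otimes> m" unfolding r_coset_def by blast
    have nc: "n \<in> carrier G" using n N.subset by blast
    have "n = y \<otimes> inv m" using n nc mc by (simp add: gsimps)
    moreover have "y \<otimes> inv m \<in> H" using y m MH subgroup.m_closed[OF H] subgroup.m_inv_closed[OF H] by blast
    ultimately have "n \<in> M" using n(1) HNM by blast
    thus ?thesis using n(2) m subgroup.m_closed[OF Ms] by simp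
  qed
  obtain k where k: "card (rcosets N) = p ^ k" using pidx[OF N(1,2)] by blast
  define Q where "Q = G Mod N"
  have gQ: "group Q" unfolding Q_def by (rule N.factorgroup_is_group)
  have cQ: "carrier Q = rcosets N" unfolding Q_def FactGroup_def by simp
  have ordQ: "order Q = p ^ k" using k cQ by (simp add: order_def)
  have finQ: "finite (carrier Q)"
  proof (rule ccontr)
    assume "infinite (carrier Q)"
    hence "order Q = 0" by (simp add: order_def)
    thus False using ordQ pr by (simp add: prime_gt_0_nat)
  qed
  define \<phi> where "\<phi> = (\<lambda>x. N #> x)"
  have hom: "group_hom G Q \<phi>"
    unfolding group_hom_def group_hom_axioms_def \<phi>_def Q_def
    using grp N.factorgroup_is_group N.r_coset_hom_Mod by blast
  define A where "A = \<phi> ` H"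
  define B where "B = \<phi> ` M"
  have subA: "subgroup A Q" unfolding A_def by (rule group_hom.subgroup_img_is_subgroup[OF hom H])
  have subB: "subgroup B Q" unfolding B_def by (rule group_hom.subgroup_img_is_subgroup[OF hom Ms])
  have BA: "B \<subseteq> A" unfolding A_def B_def using MH by blast
  define Qa where "Qa = Q\<lparr>carrier := A\<rparr>"
  have gQa: "group Qa" unfolding Qa_def by (rule subgroup.subgroup_is_group[OF subA gQ])
  have cQa: "carrier Qa = A" unfolding Qa_def by simp
  have finQa: "finite (carrier Qa)" using cQa subgroup.subset[OF subA] finQ finite_subset by metis
  have "card A dvd p ^ k" using group.lagrange[OF gQ subA] ordQ by (metis dvd_triv_right)
  then obtain j where "card A = p ^ j" using divides_primepow_nat[OF pr] by blast
  hence ordQa: "order Qa = p ^ j" unfolding order_def cQa .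
  have subBa: "subgroup B Qa" unfolding Qa_def by (rule group.subgroup_incl[OF gQ subB subA BA])
  have neB: "B \<noteq> carrier Qa"
  proof
    assume "B = carrier Qa"
    hence BA': "B = A" using cQa by simp
    have "H \<subseteq> M"
    proof
      fix y assume y: "y \<in> H"
      have "\<phi> y \<in> B" using BA' y unfolding A_def by blast
      then obtain m where m: "m \<in> M" "\<phi> y = \<phi> m" unfolding B_def by blast
      show "y \<in> M" using backr[OF y m(1)] m(2) unfolding \<phi>_def by simp
    qed
    thus False using MH by blast
  qed
  have mx: "\<forall>L. subgroup L Qa \<and> B \<subseteq> L \<longrightarrow> L = B \<or> L = carrier Qa"
  proof (intro allI impI, elim conjE)
    fix L assume L: "subgroup L Qa" and BL: "B \<subseteq> L"
    have LA: "L \<subseteq> A" using subgroup.subset[OF L] cQa by simp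
    have LQ: "subgroup L Q" using group.incl_subgroup[OF gQ subA] L unfolding Qa_def by blast
    define Lp where "Lp = {x \<in> H. \<phi> x \<in> L}"
    have Lps: "subgroup Lp G"
    proof (rule subgroupI)
      show "Lp \<subseteq> carrier G" unfolding Lp_def using Hc by blast
      have "\<phi> \<one> \<in> L" using group_hom.hom_one[OF hom] subgroup.one_closed[OF LQ] by simp
      hence "\<one> \<in> Lp" unfolding Lp_def using subgroup.one_closed[OF H] by blast
      thus "Lp \<noteq> {}" by blast
      show "inv a \<in> Lp" if a: "a \<in> Lp" for a
      proof -
        have ac: "a \<in> carrier G" "a \<in> H" "\<phi> a \<in> L" using a Hc unfolding Lp_def by auto
        have "\<phi> (inv a) = inv\<^bsub>Q\<^esub> (\<phi> a)" by (rule group_hom.hom_inv[OF hom ac(1)])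
        hence "\<phi> (inv a) \<in> L" using subgroup.m_inv_closed[OF LQ ac(3)] by simp
        thus ?thesis using subgroup.m_inv_closed[OF H ac(2)] unfolding Lp_def by blast
      qed
      show "a \<otimes> b \<in> Lp" if a: "a \<in> Lp" and b: "b \<in> Lp" for a b
      proof -
        have ac: "a \<in> carrier G" "a \<in> H" "\<phi> a \<in> L" using a Hc unfolding Lp_def by auto
        have bc: "b \<in> carrier G" "b \<in> H" "\<phi> b \<in> L" using b Hc unfolding Lp_def by auto
        have "\<phi> (a \<otimes> b) = \<phi> a \<otimes>\<^bsub>Q\<^esub> \<phi> b" by (rule group_hom.hom_mult[OF hom ac(1) bc(1)])
        hence "\<phi> (a \<otimes> b) \<in> L" using subgroup.m_closed[OF LQ ac(3) bc(3)] by simp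
        thus ?thesis using subgroup.m_closed[OF H ac(2) bc(2)] unfolding Lp_def by blast
      qed
    qed
    have MLp: "M \<subseteq> Lp" unfolding Lp_def B_def using MH BL B_def by blast
    have LpH: "Lp \<subseteq> H" unfolding Lp_def by blast
    have Lpo: "openin (subtopology T H) Lp" by (rule open_super[OF H Ms Lps MLp LpH Mo])
    show "L = B \<or> L = carrier Qa"
    proof (cases "Lp = H")
      case True
      hence "A \<subseteq> L" unfolding A_def Lp_def by blast
      thus ?thesis using LA cQa by blast
    next
      case False
      hence "Lp = M" using Mmax[OF Lps MLp _ Lpo] LpH by blast
      hence "L \<subseteq> B"
      proof -
        assume LpM: "Lp = M"
        show "L \<subseteq> B"
        proof
          fix y assume y: "y \<in> L"
          then obtain x where x: "x \<in> H" "y = \<phi> x" using LA unfolding A_def by blast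
          hence "x \<in> Lp" using y unfolding Lp_def by blast
          thus "y \<in> B" using LpM x unfolding B_def by blast
        qed
      qed
      thus ?thesis using BL by blast
    qed
  qed
  have phA: "\<phi> h \<in> carrier Qa" using h cQa unfolding A_def by blast
  have "\<phi> h [^]\<^bsub>Qa\<^esub> p \<in> B" by (rule maxsub_pow[OF gQa finQa ordQa pr subBa neB mx phA])
  moreover have "\<phi> h [^]\<^bsub>Qa\<^esub> p = \<phi> h [^]\<^bsub>Q\<^esub> p"
    unfolding Qa_def using monoid.nat_pow_consistent[OF group.is_monoid[OF gQ]] by simp
  moreover have "\<phi> h [^]\<^bsub>Q\<^esub> p = \<phi> (h [^] p)"
    unfolding \<phi>_def Q_def using N.FactGroup_pow h Hc by blast
  ultimately have "\<phi> (h [^] p) \<in> B" by simp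
  then obtain m where m: "m \<in> M" "\<phi> (h [^] p) = \<phi> m" unfolding B_def by blast
  show ?thesis using backr[OF sub_nat_pow[OF H h] m(1)] m(2) unfolding \<phi>_def by simp
qed

end

context ppg begin

lemma rc_eq_gen:
  assumes V: "subgroup V G" and g: "g \<in> carrier G"
  shows "V #> g = {x \<in> carrier G. x \<otimes> inv g \<in> V}"
proof
  show "V #> g \<subseteq> {x \<in> carrier G. x \<otimes> inv g \<in> V}"
  proof
    fix x assume "x \<in> V #> g"
    then obtain v where v: "v \<in> V" "x = v \<otimes> g" unfolding r_coset_def by blast
    have vc: "v \<in> carrier G" using v subgroup.subset[OF V] by blast
    have "x \<otimes> inv g = v" using v vc g by (simp add: gsimps)
    thus "x \<in> {x \<in> carrier G. x \<otimes> inv g \<in> V}" using v vc g by simp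
  qed
  show "{x \<in> carrier G. x \<otimes> inv g \<in> V} \<subseteq> V #> g"
  proof
    fix x assume x: "x \<in> {x \<in> carrier G. x \<otimes> inv g \<in> V}"
    have "x = (x \<otimes> inv g) \<otimes> g" using x g by (simp add: gsimps)
    thus "x \<in> V #> g" using x unfolding r_coset_def by blast
  qed
qed

lemma frattini_sub: "frattini G T H \<subseteq> H"
  unfolding frattini_def by blast

lemma pow_in_frattini: "subgroup H G \<Longrightarrow> h \<in> H \<Longrightarrow> h [^] p \<in> frattini G T H"
  unfolding frattini_def using sub_nat_pow pow_in_max by blast

lemma frattini_cs:
  assumes H: "subgroup H G" "closedin T H"
  shows "subgroup (frattini G T H) G" "closedin T (frattini G T H)"
proof -
  define Ms where "Ms = {M. maximal_open_subgroup G T H M}"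
  have F: "frattini G T H = H \<inter> \<Inter> Ms" unfolding frattini_def Ms_def by simp
  have Msub: "subgroup M G" if "M \<in> Ms" for M using that unfolding Ms_def maximal_open_subgroup_def by blast
  have MH: "M \<subseteq> H" if "M \<in> Ms" for M using that unfolding Ms_def maximal_open_subgroup_def by blast
  have Mo: "openin (subtopology T H) M" if "M \<in> Ms" for M using that unfolding Ms_def maximal_open_subgroup_def by blast
  show "subgroup (frattini G T H) G" unfolding F
  proof (rule subgroupI)
    show "H \<inter> \<Inter> Ms \<subseteq> carrier G" using subgroup.subset[OF H(1)] by blast
    have "\<one> \<in> H \<inter> \<Inter> Ms" using subgroup.one_closed[OF H(1)] subgroup.one_closed[OF Msub] by blast
    thus "H \<inter> \<Inter> Ms \<noteq> {}" by blast
    show "inv a \<in> H \<inter> \<Inter> Ms" if "a \<in> H \<inter> \<Inter> Ms" for a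
      using that subgroup.m_inv_closed[OF H(1)] subgroup.m_inv_closed[OF Msub] by blast
    show "a \<otimes> b \<in> H \<inter> \<Inter> Ms" if "a \<in> H \<inter> \<Inter> Ms" "b \<in> H \<inter> \<Inter> Ms" for a b
      using that subgroup.m_closed[OF H(1)] subgroup.m_closed[OF Msub] by blast
  qed
  have Mcl: "closedin T M" if "M \<in> Ms" for M
    by (rule open_sub_closed[OF H Msub[OF that] MH[OF that] Mo[OF that]])
  show "closedin T (frattini G T H)"
  proof (cases "Ms = {}")
    case True
    thus ?thesis unfolding F using H(2) by simp
  next
    case False
    have "closedin T (\<Inter> Ms)" by (rule closedin_Inter[OF False]) (use Mcl in blast)
    thus ?thesis unfolding F using H(2) by (rule closedin_Int[rotated])
  qed
qed

lemma frattini_cyclic: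
  assumes Hfg: "fg_subgroup G T H" and x: "x \<in> carrier G" and xp: "x [^] p \<in> frattini G T H"
  shows "fg_subgroup G T (T closure_of generate G {x})"
    "frattini G T (T closure_of generate G {x}) \<subseteq> frattini G T H"
    "x \<in> T closure_of generate G {x}"
proof -
  define C where "C = T closure_of generate G {x}"
  have Hs: "subgroup H G" and Hcl: "closedin T H" using Hfg unfolding fg_subgroup_def closed_subgroup_def by auto
  have gsub: "subgroup (generate G {x}) G" using generate_is_subgroup x by simp
  have gcar: "generate G {x} \<subseteq> carrier G" using subgroup.subset[OF gsub] .
  have Cs: "subgroup C G" unfolding C_def by (rule closure_subgroup[OF gsub])
  have Ccar: "C \<subseteq> carrier G" using subgroup.subset[OF Cs] .
  have Ccl: "closedin T C" unfolding C_def by (rule closedin_closure_of)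
  have gC: "generate G {x} \<subseteq> C" unfolding C_def by (rule closure_of_subset) (use gcar tsp in simp)
  have xg: "x \<in> generate G {x}" by (rule generate.incl) simp
  have xC: "x \<in> C" using xg gC by blast
  show "x \<in> T closure_of generate G {x}" using xC C_def by simp
  have fgC: "fg_subgroup G T C" unfolding fg_subgroup_def closed_subgroup_def
  proof (intro conjI Cs Ccl exI[of _ "{x}"])
    show "finite {x}" by simp
    show "{x} \<subseteq> C" using xC by simp
    show "T closure_of generate G {x} = C" by (simp add: C_def)
  qed
  thus "fg_subgroup G T (T closure_of generate G {x})" by (simp add: C_def)
  have FH: "subgroup (frattini G T H) G" "closedin T (frattini G T H)" using frattini_cs[OF Hs Hcl] by auto
  define D where "D = C \<inter> frattini G T H"
  have Ds: "subgroup D G" unfolding D_def by (rule subgroups_Inter_pair[OF Cs FH(1)])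
  have Dcar: "D \<subseteq> carrier G" using subgroup.subset[OF Ds] .
  have Dcl: "closedin T D" unfolding D_def by (rule closedin_Int[OF Ccl FH(2)])
  have DC: "D \<subseteq> C" unfolding D_def by blast
  have xpg: "x [^] p \<in> generate G {x}" by (rule sub_nat_pow[OF gsub xg])
  have xpD: "x [^] p \<in> D" using xpg gC xp D_def by blast
  have rcl: "closedin T (D #> g)" if g: "g \<in> carrier G" for g
    unfolding rc_eq_gen[OF Ds g] by (rule closed_pre[OF cm_rmult Dcl]) (use g in simp)
  define U where "U = (\<Union>i\<in>{..<p}. D #> (x [^] i))"
  have Ucl: "closedin T U" unfolding U_def
    by (rule closedin_Union) (auto intro: rcl x)
  have genU: "generate G {x} \<subseteq> U"
  proof
    fix y assume "y \<in> generate G {x}"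
    then obtain k :: int where y: "y = x [^] k" using generate_pow[OF x] by blast
    define q where "q = k div int p"
    define r where "r = k mod int p"
    have p0: "int p > 0" using pr prime_gt_0_nat by simp
    have r: "0 \<le> r" "r < int p" unfolding r_def using p0 by auto
    have kqr: "k = int p * q + r" unfolding q_def r_def by (simp add: mult.commute)
    have "y = x [^] (int p * q) \<otimes> x [^] r" using y kqr int_pow_mult[OF x] by simp
    moreover have "x [^] (int p * q) = (x [^] p) [^] q"
      using int_pow_pow[OF x, of "int p" q] by (simp add: int_pow_int)
    moreover have "x [^] r = x [^] (nat r)" using r(1) int_pow_int[of G x "nat r"] by simp
    ultimately have y2: "y = (x [^] p) [^] q \<otimes> x [^] (nat r)" by simp
    have "(x [^] p) [^] q \<in> D" by (rule subgroup_int_pow_closed[OF Ds xpD])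
    hence "y \<in> D #> x [^] (nat r)" using y2 unfolding r_coset_def by blast
    moreover have "nat r < p" using r by simp
    ultimately show "y \<in> U" unfolding U_def by blast
  qed
  have CU: "C \<subseteq> U" unfolding C_def by (rule closure_of_minimal[OF genU Ucl])
  have mainD: "frattini G T C \<subseteq> D"
  proof (cases "D = C")
    case True
    thus ?thesis using frattini_sub[of C] by simp
  next
    case False
    have Dmax: "maximal_open_subgroup G T C D"
      unfolding maximal_open_subgroup_def
    proof (intro conjI Ds allI impI)
      show "D \<subset> C" using DC False by blast
      show "openin (subtopology T C) D"
      proof -
        define Cm where "Cm = C \<inter> (\<Union>i\<in>{i. i < p \<and> x [^] i \<notin> D}. D #> (x [^] i))"
        have Cmcl: "closedin T Cm" unfolding Cm_def
          by (rule closedin_Int[OF Ccl], rule closedin_Union) (auto intro: rcl x)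
        have CD: "C - D = Cm"
        proof
          show "C - D \<subseteq> Cm"
          proof
            fix y assume y: "y \<in> C - D"
            then obtain i where i: "i < p" "y \<in> D #> x [^] i" using CU unfolding U_def by blast
            have "x [^] i \<notin> D"
            proof
              assume "x [^] i \<in> D"
              hence "D #> x [^] i = D" by (rule subgroup.rcos_const[OF Ds grp])
              thus False using i y by blast
            qed
            thus "y \<in> Cm" unfolding Cm_def using y i by blast
          qed
          show "Cm \<subseteq> C - D"
          proof
            fix y assume y: "y \<in> Cm"
            then obtain i where i: "i < p" "x [^] i \<notin> D" "y \<in> D #> x [^] i" and yC: "y \<in> C"
              unfolding Cm_def by blast
            obtain d where d: "d \<in> D" "y = d \<otimes> x [^] i" using i(3) unfolding r_coset_def by blast
            have dc: "d \<in> carrier G" using d(1) Dcar by blast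
            have "y \<notin> D"
            proof
              assume yD: "y \<in> D"
              have "inv d \<otimes> y \<in> D" using subgroup.m_closed[OF Ds subgroup.m_inv_closed[OF Ds d(1)] yD] .
              moreover have "inv d \<otimes> y = x [^] i" using d dc x by (simp add: gsimps)
              ultimately show False using i(2) by simp
            qed
            thus "y \<in> C - D" using yC by blast
          qed
        qed
        have "openin T (topspace T - Cm)" using Cmcl unfolding closedin_def by blast
        moreover have "D = (topspace T - Cm) \<inter> C" using CD DC Ccar tsp by blast
        ultimately show ?thesis unfolding openin_subtopology by blast
      qed
      fix L assume L: "subgroup L G \<and> D \<subseteq> L \<and> L \<subset> C \<and> openin (subtopology T C) L"
      have Ls: "subgroup L G" and DL: "D \<subseteq> L" and LC: "L \<subset> C" and Lo: "openin (subtopology T C) L"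
        using L by auto
      have Lcl: "closedin T L" by (rule open_sub_closed[OF Cs Ccl Ls _ Lo]) (use LC in blast)
      have xL: "x \<notin> L"
      proof
        assume "x \<in> L"
        hence "generate G {x} \<subseteq> L" using generate_subgroup_incl[OF _ Ls] by simp
        hence "C \<subseteq> L" unfolding C_def by (rule closure_of_minimal[OF _ Lcl])
        thus False using LC by blast
      qed
      show "L = D"
      proof
        show "L \<subseteq> D"
        proof
          fix l assume l: "l \<in> L"
          have "l \<in> U" using l LC CU by blast
          then obtain i where i: "i < p" "l \<in> D #> x [^] i" unfolding U_def by blast
          obtain d where d: "d \<in> D" "l = d \<otimes> x [^] i" using i(2) unfolding r_coset_def by blast
          have dc: "d \<in> carrier G" using d(1) Dcar by blast
          have xiL: "x [^] i \<in> L"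
          proof -
            have "inv d \<otimes> l \<in> L" using subgroup.m_closed[OF Ls subgroup.m_inv_closed[OF Ls] l] d(1) DL by blast
            moreover have "inv d \<otimes> l = x [^] i" using d dc x by (simp add: gsimps)
            ultimately show ?thesis by simp
          qed
          show "l \<in> D"
          proof (cases "i = 0")
            case True
            thus ?thesis using d dc by simp
          next
            case False
            have "\<not> p dvd i" using False i(1) by (auto dest: dvd_imp_le)
            hence "coprime p i" by (rule prime_imp_coprime_nat[OF pr])
            hence "coprime i p" by (simp add: coprime_commute)
            hence "gcd i p = 1" by (rule coprime_imp_gcd_eq_1)
            hence "gcd (int i) (int p) = 1" by (simp add: gcd_int_int_eq)
            then obtain u v where uv: "u * int i + v * int p = 1"
              using bezout_int[of "int i" "int p"] by auto
            have xi': "x [^] (int i) \<in> L" using xiL by (simp add: int_pow_int)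
            have xp': "x [^] (int p) \<in> L" using xpD DL by (simp add: int_pow_int subsetD)
            have "x = x [^] (1::int)" using x by simp
            also have "\<dots> = x [^] (int i * u + int p * v)" using uv by (simp add: mult.commute)
            also have "\<dots> = (x [^] (int i)) [^] u \<otimes> (x [^] (int p)) [^] v"
              using x by (simp only: int_pow_mult int_pow_pow)
            finally have xeq: "x = (x [^] (int i)) [^] u \<otimes> (x [^] (int p)) [^] v" .
            have "x \<in> L" by (subst xeq, rule subgroup.m_closed[OF Ls subgroup_int_pow_closed[OF Ls xi'] subgroup_int_pow_closed[OF Ls xp']])
            thus ?thesis using xL by simp
          qed
        qed
        show "D \<subseteq> L" by (rule DL)
      qed
    qed
    show ?thesis unfolding frattini_def using Dmax by blast
  qed
  show "frattini G T (T closure_of generate G {x}) \<subseteq> frattini G T H"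
    using mainD unfolding D_def C_def by blast
qed

theorem main_iff:
  "frattini_resistant p G T \<longleftrightarrow>
    (\<forall>H K. fg_subgroup G T H \<and> fg_subgroup G T K \<and> frattini G T H \<subseteq> frattini G T K
       \<longrightarrow> H \<subseteq> K)"
proof
  assume FR: "frattini_resistant p G T"
  show "\<forall>H K. fg_subgroup G T H \<and> fg_subgroup G T K \<and> frattini G T H \<subseteq> frattini G T K \<longrightarrow> H \<subseteq> K"
  proof (intro allI impI, elim conjE)
    fix H K assume H: "fg_subgroup G T H" and K: "fg_subgroup G T K" and HK: "frattini G T H \<subseteq> frattini G T K"
    have Hs: "subgroup H G" using H unfolding fg_subgroup_def closed_subgroup_def by blast
    have hier: "hierarchical p G K (frattini G T K)" using FR K unfolding frattini_resistant_def by blast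
    show "H \<subseteq> K"
    proof
      fix h assume h: "h \<in> H"
      have hc: "h \<in> carrier G" using h subgroup.subset[OF Hs] by blast
      have "h [^] p \<in> frattini G T K" using pow_in_frattini[OF Hs h] HK by blast
      thus "h \<in> K" using hier hc unfolding hierarchical_def by blast
    qed
  qed
next
  assume R: "\<forall>H K. fg_subgroup G T H \<and> fg_subgroup G T K \<and> frattini G T H \<subseteq> frattini G T K \<longrightarrow> H \<subseteq> K"
  show "frattini_resistant p G T"
    unfolding frattini_resistant_def hierarchical_def
  proof (intro allI impI ballI)
    fix H x assume H: "fg_subgroup G T H" and x: "x \<in> carrier G" and xp: "x [^] p \<in> frattini G T H"
    note fc = frattini_cyclic[OF H x xp]
    have "T closure_of generate G {x} \<subseteq> H" using R fc(1) H fc(2) by blast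
    thus "x \<in> H" using fc(3) by blast
  qed
qed

end

theorem mainTheorem18:
  fixes p :: nat and G :: "('a, 'b) monoid_scheme" and T :: "'a topology"
  assumes "pro_p_group p G T"
  shows "frattini_resistant p G T \<longleftrightarrow>
    (\<forall>H K. fg_subgroup G T H \<and> fg_subgroup G T K \<and> frattini G T H \<subseteq> frattini G T K
       \<longrightarrow> H \<subseteq> K)"
proof -
  interpret ppg p G T using assms by (rule ppg.intro)
  show ?thesis by (rule main_iff)
qed

end
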